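(* In the two-party one-way communication (Holevo–Frenkel–Weiner) scenario with no pre-shared correlation between the parties, the utility of communicating one qubit is higher than that of one bit of classical communication: there exist finite sets $\mathcal{X},\mathcal{B}$ and a payoff function $\beta$ on correlations $P(\mathcal{B}|\mathcal{X})$ such that $\sup_{P\in\mathcal{Q}}\beta(P)>\sup_{P\in\mathcal{C}}\beta(P)$.
   Context: Scenario: Alice receives an input $x$ from a finite set $\mathcal{X}$, Bob must output $b$ from a finite set $\mathcal{B}$; a correlation is a conditional distribution $P=(P(b|x))$, and a task is a payoff function $\beta$ assigning a real number to each correlation; the utility of a resource is $\sup\beta(P)$ over the correlations achievable with it. $\mathcal{C}$ (one classical bit, no shared randomness, local randomness allowed): correlations $P(b|x)=\sum_{m\in\{0,1\}}E(m|x)D(b|m)$ with $E(\cdot|x)$ a probability distribution on $\{0,1\}$ for each $x$ and $D(\cdot|m)$ a probability distribution on $\mathcal{B}$ for each $m$. $\mathcal{Q}$ (one qubit, no shared correlation): correlations $P(b|x)=\operatorname{Tr}(\rho_x\pi_b)$, where each $\rho_x$ is a density operator on $\mathbb{C}^2$ and $\{\pi_b\}_{b\in\mathcal{B}}$ is a POVM on $\mathbb{C}^2$ ($\pi_b\ge0$, $\sum_b\pi_b=\mathbb{I}$). *)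

theory Defs
  imports "HOL-Analysis.Analysis"
begin

(* A correlation P(b|x) is represented as P b x :: real, with inputs x in X and
   outputs b in B (finite sets of naturals); P is taken to be 0 outside B x X so that
   correlations are determined by their values on B x X. *)

type_synonym corr = "nat \<Rightarrow> nat \<Rightarrow> real"

definition tr2 :: "complex^2^2 \<Rightarrow> complex" where
  "tr2 A = (\<Sum>i\<in>UNIV. A $ i $ i)"

definition psd2 :: "complex^2^2 \<Rightarrow> bool" where
  "psd2 A \<longleftrightarrow> (\<forall>v::complex^2.
      let q = (\<Sum>i\<in>UNIV. cnj (v $ i) * (\<Sum>j\<in>UNIV. A $ i $ j * v $ j))
      in Im q = 0 \<and> Re q \<ge> 0)"

definition density2 :: "complex^2^2 \<Rightarrow> bool" where
  "density2 \<rho> \<longleftrightarrow> psd2 \<rho> \<and> tr2 \<rho> = 1"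

definition povm2 :: "nat set \<Rightarrow> (nat \<Rightarrow> complex^2^2) \<Rightarrow> bool" where
  "povm2 B \<pi> \<longleftrightarrow> (\<forall>b\<in>B. psd2 (\<pi> b)) \<and> (\<Sum>b\<in>B. \<pi> b) = mat 1"

definition quantum_corrs :: "nat set \<Rightarrow> nat set \<Rightarrow> corr set" where
  "quantum_corrs X B = {P. \<exists>\<rho> \<pi>. (\<forall>x\<in>X. density2 (\<rho> x)) \<and> povm2 B \<pi> \<and>
      (\<forall>x b. if x \<in> X \<and> b \<in> B then complex_of_real (P b x) = tr2 (\<rho> x ** \<pi> b)
             else P b x = 0)}"

(* C: one classical bit, no shared randomness, local randomness allowed *)
definition classical_corrs :: "nat set \<Rightarrow> nat set \<Rightarrow> corr set" where
  "classical_corrs X B = {P. \<exists>(E::nat \<Rightarrow> nat \<Rightarrow> real) (D::nat \<Rightarrow> nat \<Rightarrow> real).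
      (\<forall>x\<in>X. (\<forall>m\<in>{0,1}. E m x \<ge> 0) \<and> (\<Sum>m\<in>{0,1}. E m x) = 1) \<and>
      (\<forall>m\<in>{0,1}. (\<forall>b\<in>B. D b m \<ge> 0) \<and> (\<Sum>b\<in>B. D b m) = 1) \<and>
      (\<forall>x b. P b x = (if x \<in> X \<and> b \<in> B then (\<Sum>m\<in>{0,1}. E m x * D b m) else 0))}"

definition utility :: "(corr \<Rightarrow> real) \<Rightarrow> corr set \<Rightarrow> ereal" where
  "utility \<beta> S = (SUP P\<in>S. ereal (\<beta> P))"

end

theory Submission
  imports Defs
begin

definition mk :: "real \<Rightarrow> real \<Rightarrow> real \<Rightarrow> complex^2^2" where
  "mk a b d = (\<chi> i j. if i = 1 then (if j = 1 then of_real a else of_real b)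
                     else (if j = 1 then of_real b else of_real d))"

lemma mk_nth[simp]: "mk a b d $ 1 $ 1 = of_real a" "mk a b d $ 1 $ 2 = of_real b"
  "mk a b d $ 2 $ 1 = of_real b" "mk a b d $ 2 $ 2 = of_real d"
  by (simp_all add: mk_def)

lemma quad_nonneg:
  fixes a b d x y :: real
  assumes "a \<ge> 0" "d \<ge> 0" "b*b \<le> a*d"
  shows "a*x*x + 2*b*x*y + d*y*y \<ge> 0"
proof (cases "a = 0")
  case True
  have "b*b \<le> 0" using assms(3) True by simp
  then have "b*b = 0" using zero_le_square[of b] by linarith
  then have "b = 0" by simp
  then show ?thesis using True assms by (simp add: mult.assoc)
next
  case False
  then have a: "a > 0" using assms by simp
  have "a*(a*x*x + 2*b*x*y + d*y*y) = (a*x+b*y)^2 + (a*d-b*b)*y*y"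
    by (simp add: algebra_simps power2_eq_square)
  also have "... \<ge> 0"
  proof -
    have "(a*d - b*b)*y*y \<ge> 0" using assms(3) by (simp add: mult.assoc)
    then show ?thesis by (simp add: add_nonneg_nonneg)
  qed
  finally show ?thesis using a by (simp add: zero_le_mult_iff)
qed

lemma psd_mk:
  assumes "a \<ge> 0" "d \<ge> 0" "b*b \<le> a*d"
  shows "psd2 (mk a b d)"
  unfolding psd2_def Let_def
proof
  fix v :: "complex^2"
  obtain x1 y1 where v1: "v$1 = Complex x1 y1" by (metis complex.exhaust)
  obtain x2 y2 where v2: "v$2 = Complex x2 y2" by (metis complex.exhaust)
  have q: "(\<Sum>i\<in>UNIV. cnj (v $ i) * (\<Sum>j\<in>UNIV. mk a b d $ i $ j * v $ j))
    = Complex (a*x1*x1 + 2*b*x1*x2 + d*x2*x2 + (a*y1*y1 + 2*b*y1*y2 + d*y2*y2)) 0"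
    by (simp add: sum_2 v1 v2 complex_eq_iff algebra_simps)
  show "Im (\<Sum>i\<in>UNIV. cnj (v $ i) * (\<Sum>j\<in>UNIV. mk a b d $ i $ j * v $ j)) = 0 \<and>
    0 \<le> Re (\<Sum>i\<in>UNIV. cnj (v $ i) * (\<Sum>j\<in>UNIV. mk a b d $ i $ j * v $ j))"
    unfolding q using quad_nonneg[OF assms, of x1 x2] quad_nonneg[OF assms, of y1 y2] by simp
qed

lemma tr_mk: "tr2 (mk a b d ** mk a' b' d') = of_real (a*a' + 2*b*b' + d*d')"
  by (simp add: tr2_def sum_2 matrix_matrix_mult_def algebra_simps)


lemma tr_mk1: "tr2 (mk a b d) = of_real (a + d)"
  by (simp add: tr2_def sum_2)

definition rho :: "nat \<Rightarrow> complex^2^2" where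
  "rho x = (if x = 0 then mk 1 0 0 else if x = 1 then mk 0 0 1 else mk (1/2) (1/2) (1/2))"

definition pim :: "nat \<Rightarrow> complex^2^2" where
  "pim b = (if b = 0 then mk (1/2) 0 0 else if b = 1 then mk (1/4) (1/4) (1/4)
            else mk (1/4) (-1/4) (3/4))"

definition Pq :: corr where
  "Pq b x = (if x \<in> {0,1,2} \<and> b \<in> {0,1,2} then Re (tr2 (rho x ** pim b)) else 0)"

lemma tr_re: "tr2 (rho x ** pim b) = of_real (Re (tr2 (rho x ** pim b)))"
  unfolding rho_def pim_def by (simp add: tr_mk)

definition bet :: "corr \<Rightarrow> real" where
  "bet P = \<bar>(P 0 0 - P 0 2)*(P 1 1 - P 1 2) - (P 1 0 - P 1 2)*(P 0 1 - P 0 2)\<bar>"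

lemma Pq_in: "Pq \<in> quantum_corrs {0,1,2} {0,1,2}"
proof -
  have dens: "\<forall>x\<in>{0::nat,1,2}. density2 (rho x)"
    by (auto simp: density2_def rho_def tr_mk1 intro!: psd_mk)
  have ps: "\<forall>b\<in>{0::nat,1,2}. psd2 (pim b)"
    by (auto simp: pim_def intro!: psd_mk)
  have sm: "(\<Sum>b\<in>{0::nat,1,2}. pim b) = mat 1"
    by (simp add: pim_def vec_eq_iff forall_2 mat_def)
  have eq: "\<forall>x b. if x \<in> {0,1,2} \<and> b \<in> {0,1,2} then complex_of_real (Pq b x) = tr2 (rho x ** pim b)
             else Pq b x = 0"
    by (simp add: Pq_def tr_re[symmetric])
  show ?thesis unfolding quantum_corrs_def povm2_def
    by (intro CollectI exI[of _ rho] exI[of _ pim] conjI dens ps sm eq)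
qed

lemma bet_Pq: "bet Pq = 1/8"
  by (simp add: bet_def Pq_def rho_def pim_def tr_mk)

lemma bet_cl: assumes "P \<in> classical_corrs {0,1,2} {0,1,2}" shows "bet P = 0"
proof -
  from assms obtain E D where
    E: "\<forall>x\<in>{0::nat,1,2}. (\<forall>m\<in>{0::nat,1}. E m x \<ge> 0) \<and> (\<Sum>m\<in>{0::nat,1}. E m x) = (1::real)" and
    P: "\<forall>x b. P b x = (if x \<in> {0::nat,1,2} \<and> b \<in> {0::nat,1,2} then (\<Sum>m\<in>{0::nat,1}. E m x * D b m) else 0)"
    unfolding classical_corrs_def by blast
  have e: "E 1 x = 1 - E 0 x" if "x \<in> {0,1,2}" for x using E that by auto
  have p: "P b x = E 0 x * D b 0 + (1 - E 0 x) * D b 1" if "x \<in> {0,1,2}" "b \<in> {0,1,2}" for b x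
    using P e[OF that(1)] that by simp
  show ?thesis unfolding bet_def by (simp add: p algebra_simps)
qed

theorem theorem2:
  shows "\<exists>(X::nat set) (B::nat set) (\<beta>::corr \<Rightarrow> real).
           finite X \<and> finite B \<and>
           utility \<beta> (quantum_corrs X B) > utility \<beta> (classical_corrs X B)"
proof (intro exI conjI)
  have c: "utility bet (classical_corrs {0,1,2} {0,1,2}) \<le> 0"
    unfolding utility_def by (rule SUP_least) (simp add: bet_cl)
  have q: "ereal (1/8) \<le> utility bet (quantum_corrs {0,1,2} {0,1,2})"
    unfolding utility_def using Pq_in bet_Pq by (metis SUP_upper)
  show "utility bet (classical_corrs {0,1,2} {0,1,2}) < utility bet (quantum_corrs {0,1,2} {0,1,2})"
  proof -
    have "(0::ereal) < ereal (1/8)" by simp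
    then show ?thesis using c q by (meson order.strict_trans1 order.strict_trans2)
  qed
qed simp_all

end
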